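(* For every $g\in C^\infty(\mathcal G_H)$ and $z\in\mathbb D_H^\circ$, $$(I_0^H)^\sharp g(z)=\Big(d^{1/2}\,(I_0^E)^\sharp\big[\mu^{-2}\,\tilde g\big]\Big)(\Phi(z)),\qquad \tilde g(\beta,\alpha):=g(\beta,\tan\alpha).$$
   Context: $\mathbb D_H^\circ=\{|z|<1\}$ with Poincaré metric $g_H=c^{-2}|dz|^2$, $c=(1-|z|^2)/2$; $\mathcal G_H=\mathbb S^1_\beta\times\mathbb R_a$, $\gamma_{\beta,a}(t)=e^{i\beta}\frac{(2+ia)\tanh(t/2)+ia}{ia\tanh(t/2)-2+ia}$ (unit-speed geodesics). $(I_0^H)^\sharp g(z)=\int_{S_z\mathbb D_H}g(\pi_H(z,w))\,dS_z(w)$, where $\pi_H(z,w)$ is the unique $(\beta,a)$ such that $\gamma_{\beta,a}$ passes through $z$ with velocity $w$, and $dS_z$ is the arclength measure on the $g_H$-unit circle at $z$. $\Phi(z)=\frac{2z}{1+|z|^2}$ maps $\mathbb D_H^\circ$ onto the open Euclidean unit disk; $d(z)=1-|z|^2$. On $(\partial_+S\mathbb D_E)^\circ=\mathbb S^1_\beta\times(-\pi/2,\pi/2)_\alpha$ (point $e^{i\beta}$, direction $e^{i(\beta+\pi+\alpha)}$), $\mu(\beta,\alpha)=\cos\alpha$, and the Euclidean backprojection is $(I_0^E)^\sharp h(y)=\int_0^{2\pi}h(\beta(y,\theta),\alpha(y,\theta))d\theta$ for $y$ in the open disk, where $(\beta(y,\theta),\alpha(y,\theta))$ is the entry point/direction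 of the line through $y$ with direction $e^{i\theta}$ (so $\theta\equiv\beta+\pi+\alpha$). *)

theory Defs
  imports "HOL-Analysis.Analysis"
begin

text \<open>C-infinity functions on the plane (coinductively: differentiable everywhere,
  and every directional derivative is again C-infinity).\<close>
coinductive smooth2 :: "(real \<times> real \<Rightarrow> real) \<Rightarrow> bool" where
  "(\<forall>x. (f has_derivative f' x) (at x)) \<Longrightarrow> (\<forall>v. smooth2 (\<lambda>x. f' x v)) \<Longrightarrow> smooth2 f"

text \<open>Functions on S^1_beta x R_a, lifted to 2pi-periodic functions of (beta, a).\<close>
definition smooth_on_GH :: "(real \<times> real \<Rightarrow> real) \<Rightarrow> bool" where
  "smooth_on_GH g \<longleftrightarrow> smooth2 g \<and> (\<forall>\<beta> a. g (\<beta> + 2*pi, a) = g (\<beta>, a))"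

definition cH :: "complex \<Rightarrow> real" where
  "cH z = (1 - (cmod z)^2) / 2"

text \<open>Unit-speed hyperbolic geodesics gamma_{beta,a}(t).\<close>
definition gammaH :: "real \<Rightarrow> real \<Rightarrow> real \<Rightarrow> complex" where
  "gammaH \<beta> a t = cis \<beta> *
     (((2 + \<i> * of_real a) * of_real (tanh (t/2)) + \<i> * of_real a) /
      (\<i> * of_real a * of_real (tanh (t/2)) - 2 + \<i> * of_real a))"

definition piH :: "complex \<Rightarrow> complex \<Rightarrow> real \<times> real" where
  "piH z w = (THE (\<beta>, a). \<beta> \<in> {0..<2*pi} \<and>
      (\<exists>t. gammaH \<beta> a t = z \<and> (gammaH \<beta> a has_vector_derivative w) (at t)))"

text \<open>Hyperbolic backprojection: integral over the g_H-unit circle {w. |w| = c(z)} at z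
  w.r.t. its g_H-arclength; parametrising w = c(z) e^{i phi}, this arclength is d phi.\<close>
definition backprojH :: "(real \<times> real \<Rightarrow> real) \<Rightarrow> complex \<Rightarrow> real" where
  "backprojH g z = integral {0..2*pi} (\<lambda>\<phi>. g (piH z (of_real (cH z) * cis \<phi>)))"

definition PhiM :: "complex \<Rightarrow> complex" where
  "PhiM z = 2 * z / of_real (1 + (cmod z)^2)"

definition dfun :: "complex \<Rightarrow> real" where
  "dfun z = 1 - (cmod z)^2"

definition muE :: "real \<times> real \<Rightarrow> real" where
  "muE p = cos (snd p)"

text \<open>Entry point/direction (beta, alpha) of the line through y with direction e^{i theta}:
  entry point e^{i beta}, direction e^{i(beta+pi+alpha)} = e^{i theta}.\<close>
definition entryE :: "complex \<Rightarrow> real \<Rightarrow> real \<times> real" where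
  "entryE y \<theta> = (THE (\<beta>, \<alpha>). \<beta> \<in> {0..<2*pi} \<and> \<alpha> \<in> {-pi/2<..<pi/2} \<and>
      cis (\<beta> + pi + \<alpha>) = cis \<theta> \<and> (\<exists>s\<ge>0. y = cis \<beta> + of_real s * cis \<theta>))"

definition backprojE :: "(real \<times> real \<Rightarrow> real) \<Rightarrow> complex \<Rightarrow> real" where
  "backprojE h y = integral {0..2*pi} (\<lambda>\<theta>. h (entryE y \<theta>))"

definition gtilde :: "(real \<times> real \<Rightarrow> real) \<Rightarrow> real \<times> real \<Rightarrow> real" where
  "gtilde g p = g (fst p, tan (snd p))"

end

theory Submission
  imports Defs
begin

definition Mf :: "real \<Rightarrow> real \<Rightarrow> complex" where
  "Mf a s = ((2 + \<i> * of_real a) * of_real s + \<i> * of_real a) /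
      (\<i> * of_real a * of_real s - 2 + \<i> * of_real a)"

definition Vf :: "real \<Rightarrow> real \<Rightarrow> complex" where
  "Vf a s = - 2 * of_real (1 - s^2) / (\<i> * of_real a * of_real s - 2 + \<i> * of_real a)^2"

lemma den_nz: "\<i> * of_real a * of_real s - 2 + \<i> * of_real a \<noteq> (0::complex)"
proof
  assume "\<i> * of_real a * of_real s - 2 + \<i> * of_real a = (0::complex)"
  then have "Re (\<i> * of_real a * of_real s - 2 + \<i> * of_real a) = 0" by simp
  then show False by simp
qed

lemma gammaH_eq: "gammaH \<beta> a t = cis \<beta> * Mf a (tanh (t/2))"
  unfolding gammaH_def Mf_def by simp

lemma tanh_artanh: assumes "\<bar>x::real\<bar> < 1" shows "tanh (artanh x) = x"
proof -
  have p: "0 < 1 + x" "0 < 1 - x" using assms by auto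
  have e: "exp (- 2 * artanh x) = (1 - x) / (1 + x)"
  proof -
    have "- 2 * artanh x = ln ((1 - x) / (1 + x))"
      using p by (simp add: artanh_def ln_div)
    then show ?thesis using p by simp
  qed
  then show ?thesis using p proof -
    define E where "E = exp (- 2 * artanh x)"
    have E: "E * (1 + x) = 1 - x" "E > 0" using e p by (auto simp: E_def field_simps)
    have "tanh (artanh x) = (1 - E) / (1 + E)" by (simp add: tanh_real_altdef E_def)
    also have "\<dots> = x" using E by (simp add: field_simps)
    finally show ?thesis .
  qed
qed

lemma gammaH_deriv:
  "(gammaH \<beta> a has_vector_derivative (cis \<beta> * Vf a (tanh (t/2)))) (at t)"
proof -
  define s where "s = tanh (t/2)"
  let ?h = "\<lambda>\<zeta>::complex. cis \<beta> * (((2 + \<i> * of_real a) * \<zeta> + \<i> * of_real a) /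
      (\<i> * of_real a * \<zeta> - 2 + \<i> * of_real a))"
  have eq: "gammaH \<beta> a = ?h \<circ> (\<lambda>t. of_real (tanh (t/2)))"
    by (auto simp: gammaH_def fun_eq_iff)
  have d1: "((\<lambda>t. complex_of_real (tanh (t/2))) has_vector_derivative
     of_real ((1 - s^2) / 2)) (at t)"
    unfolding s_def
    by (auto intro!: derivative_eq_intros)
  have dn: "\<i> * of_real a * of_real s - 2 + \<i> * of_real a \<noteq> (0::complex)" by (rule den_nz)
  have d2: "(?h has_field_derivative cis \<beta> * (-4 / (\<i> * of_real a * of_real s - 2 + \<i> * of_real a)^2))
       (at (of_real s))"
    using dn
    apply (auto intro!: derivative_eq_intros)
    apply (simp add: field_simps power2_eq_square)
    done
  have "(gammaH \<beta> a has_vector_derivative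
     of_real ((1 - s^2) / 2) * (cis \<beta> * (-4 / (\<i> * of_real a * of_real s - 2 + \<i> * of_real a)^2))) (at t)"
    unfolding eq apply (rule field_vector_diff_chain_at[OF d1]) using d2 by (simp add: s_def)
  moreover have "of_real ((1 - s^2) / 2) * (cis \<beta> * (-4 / (\<i> * of_real a * of_real s - 2 + \<i> * of_real a)^2))
     = cis \<beta> * Vf a s"
  proof -
    have "\<And>D::complex. of_real ((1 - s^2) / 2) * (cis \<beta> * (-4 / D^2)) = cis \<beta> * (- 2 * of_real (1 - s^2) / D^2)"
      by (simp add: divide_simps) (simp add: algebra_simps)
    then show ?thesis unfolding Vf_def by blast
  qed
  ultimately show ?thesis by (simp add: s_def)
qed

lemma num_C: "(2 + \<i> * of_real a) * of_real s + \<i> * of_real a = Complex (2 * s) (a * (1 + s))"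
  by (simp add: complex_eq_iff algebra_simps)
lemma den_C: "\<i> * of_real a * of_real s - 2 + \<i> * of_real a = Complex (-2) (a * (1 + s))"
  by (simp add: complex_eq_iff algebra_simps)

lemma Mf_Complex: "Mf a s = Complex (2 * s) (a * (1 + s)) / Complex (-2) (a * (1 + s))"
  unfolding Mf_def num_C den_C ..

lemma Vf_Complex: "Vf a s = of_real (-2 * (1 - s^2)) / (Complex (-2) (a * (1 + s)))^2"
  unfolding Vf_def den_C by simp

lemma U_lemma:
  assumes "\<bar>s\<bar> < 1"
  shows "Mf a s * cnj (Vf a s) = of_real (cmod (Vf a s)) * (Complex (2 * s) (a * (1 + s)) / Complex 2 (a * (1 + s)))"
proof -
  define X where "X = a * (1 + s)"
  have q: "1 - s^2 > 0" using assms by (simp add: abs_square_less_1)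
  have nD: "cmod (Complex (-2) X) ^ 2 = 4 + X^2" by (simp add: cmod_def)
  have cV: "cmod (Vf a s) = 2 * (1 - s^2) / (4 + X^2)"
  proof -
    have "cmod (complex_of_real (-2 * (1 - s^2))) = 2 * (1 - s^2)"
      unfolding norm_of_real using q by simp
    then show ?thesis unfolding Vf_Complex X_def[symmetric] norm_divide norm_power nD by simp
  qed
  show ?thesis unfolding cV unfolding Mf_Complex Vf_Complex X_def[symmetric]
    by (simp add: complex_eq_iff Re_divide Im_divide power2_eq_square field_simps)
qed

lemma zeta_inj:
  assumes "s < 1" "Complex (2 * s) X / Complex 2 X = Complex (2 * s1) X1 / Complex 2 X1"
  shows "s = s1 \<and> X = X1"
proof -
  have n1: "Complex 2 X \<noteq> 0" "Complex 2 X1 \<noteq> 0" by (auto simp: complex_eq_iff)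
  have ce: "Complex (2 * s) X * Complex 2 X1 = Complex (2 * s1) X1 * Complex 2 X"
    using assms(2) n1 by (simp add: divide_simps)
  have e: "4 * s - X * X1 = 4 * s1 - X1 * X" "2 * s * X1 + 2 * X = 2 * s1 * X + 2 * X1"
    using arg_cong[where f=Re, OF ce] arg_cong[where f=Im, OF ce] by (simp_all add: algebra_simps)
  then have "s = s1" by (simp add: algebra_simps)
  with e have e2: "2 * s * X1 + 2 * X = 2 * s * X + 2 * X1" by simp
  have "(X - X1) * (1 - s) = (2 * s * X1 + 2 * X - (2 * s * X + 2 * X1)) / 2"
    by (simp add: algebra_simps)
  also have "\<dots> = 0" using e2 by simp
  finally have "(X - X1) * (1 - s) = 0" .
  with assms(1) show ?thesis using \<open>s = s1\<close> by simp
qed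

lemma cis_inj:
  assumes "a \<in> {0..<2*pi}" "b \<in> {0..<2*pi}" "cis a = cis b"
  shows "a = b"
proof -
  have "sin a = sin b \<and> cos a = cos b" using assms(3)
    by (metis cis.sel(1) cis.sel(2))
  then obtain j :: int where j: "a = b + 2 * pi * j" using sin_cos_eq_iff by blast
  have "-1 < real_of_int j" "real_of_int j < 1"
  proof -
    have d: "2 * pi * j = a - b" using j by simp
    have "a - b < 2 * pi" "- (2 * pi) < a - b" using assms(1,2) by auto
    then have "2 * pi * j < 2 * pi * 1" "2 * pi * (-1) < 2 * pi * j" unfolding d by auto
    moreover have p2: "0 < 2 * pi" by simp
    ultimately show "-1 < real_of_int j" "real_of_int j < 1"
      by (simp_all only: mult_less_cancel_left_pos[OF p2])
  qed
  then have "j = 0" by linarith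
  then show ?thesis using j by simp
qed

lemma Vf_nz: "\<bar>s\<bar> < 1 \<Longrightarrow> Vf a s \<noteq> 0"
proof -
  assume "\<bar>s\<bar> < 1"
  then have "s^2 < 1" using abs_square_less_1 by blast
  then have "s^2 \<noteq> 1" by simp
  then have "(complex_of_real s)^2 \<noteq> 1" by (metis of_real_eq_1_iff of_real_power)
  then show ?thesis unfolding Vf_def using den_nz[of a s] by simp
qed

lemma piH_char:
  assumes b: "\<beta> \<in> {0..<2*pi}" and s0: "\<bar>s0\<bar> < 1"
    and z: "cis \<beta> * Mf a s0 = z" and w: "cis \<beta> * Vf a s0 = w"
  shows "piH z w = (\<beta>, a)"
  unfolding piH_def
proof (rule the_equality)
  define t where "t = 2 * artanh s0"
  have ts: "tanh (t/2) = s0" using s0 by (simp add: t_def tanh_artanh)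
  show "case (\<beta>, a) of (\<beta>, a) \<Rightarrow> \<beta> \<in> {0..<2 * pi} \<and>
      (\<exists>t. gammaH \<beta> a t = z \<and> (gammaH \<beta> a has_vector_derivative w) (at t))"
    using b gammaH_eq[of \<beta> a t] gammaH_deriv[of \<beta> a t] z w ts by auto
next
  fix p assume "case p of (\<beta>, a) \<Rightarrow> \<beta> \<in> {0..<2 * pi} \<and>
      (\<exists>t. gammaH \<beta> a t = z \<and> (gammaH \<beta> a has_vector_derivative w) (at t))"
  then obtain \<beta>' a' t' where p: "p = (\<beta>', a')" and b': "\<beta>' \<in> {0..<2*pi}"
    and z': "gammaH \<beta>' a' t' = z" and d': "(gammaH \<beta>' a' has_vector_derivative w) (at t')"
    by (cases p) auto
  define s' where "s' = tanh (t'/2)"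
  have s': "\<bar>s'\<bar> < 1" using tanh_real_bounds[of "t'/2"] by (auto simp: s'_def)
  have z2: "cis \<beta>' * Mf a' s' = z" using z' by (simp add: gammaH_eq s'_def)
  have w2: "cis \<beta>' * Vf a' s' = w"
    using vector_derivative_unique_at[OF gammaH_deriv[of \<beta>' a' t'] d'] by (simp add: s'_def)
  have cc: "\<And>x. cis x * cnj (cis x) = 1"
    by (simp add: complex_eq_iff power2_eq_square[symmetric])
  have e1: "z * cnj w = Mf a s0 * cnj (Vf a s0)"
  proof -
    have "z * cnj w = (cis \<beta> * cnj (cis \<beta>)) * (Mf a s0 * cnj (Vf a s0))"
      using z w by (auto simp: algebra_simps)
    then show ?thesis by (simp add: cc)
  qed
  have e2: "z * cnj w = Mf a' s' * cnj (Vf a' s')"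
  proof -
    have "z * cnj w = (cis \<beta>' * cnj (cis \<beta>')) * (Mf a' s' * cnj (Vf a' s'))"
      using z2 w2 by (auto simp: algebra_simps)
    then show ?thesis by (simp add: cc)
  qed
  have n1: "cmod w = cmod (Vf a s0)" unfolding w[symmetric] by (simp add: norm_mult)
  have n2: "cmod w = cmod (Vf a' s') " unfolding w2[symmetric] by (simp add: norm_mult)
  have nz: "cmod w \<noteq> 0" using n1 Vf_nz[OF s0] by simp
  have "of_real (cmod w) * (Complex (2 * s0) (a * (1 + s0)) / Complex 2 (a * (1 + s0))) =
        of_real (cmod w) * (Complex (2 * s') (a' * (1 + s')) / Complex 2 (a' * (1 + s')))"
    using e1 e2 U_lemma[OF s0, of a] U_lemma[OF s', of a'] n1 n2 by simp
  then have "Complex (2 * s0) (a * (1 + s0)) / Complex 2 (a * (1 + s0)) =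
        Complex (2 * s') (a' * (1 + s')) / Complex 2 (a' * (1 + s'))"
  proof -
    have "complex_of_real (cmod w) \<noteq> 0" using nz by simp
    from mult_left_cancel[OF this] show ?thesis using \<open>of_real (cmod w) * _ = _\<close> by blast
  qed
  then have ss: "s0 = s' \<and> a * (1 + s0) = a' * (1 + s')"
    by (rule zeta_inj[rotated]) (use s0 in simp)
  have "1 + s0 \<noteq> 0" using s0 by simp
  then have aa: "a' = a" using ss by (metis mult_cancel_right)
  have "cis \<beta>' * Vf a s0 = cis \<beta> * Vf a s0" using w w2 ss aa by simp
  then have "cis \<beta>' = cis \<beta>" using Vf_nz[OF s0] by simp
  then have "\<beta>' = \<beta>" using cis_inj b b' by blast
  then show "p = (\<beta>, a)" using p aa by simp
qed

definition nrm :: "real \<Rightarrow> real" where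
  "nrm x = x - 2 * pi * of_int \<lfloor>x / (2 * pi)\<rfloor>"

lemma nrm_range: "nrm x \<in> {0..<2*pi}"
proof -
  have p: "0 < 2 * pi" by simp
  have "of_int \<lfloor>x / (2 * pi)\<rfloor> \<le> x / (2 * pi)" "x / (2 * pi) < of_int \<lfloor>x / (2 * pi)\<rfloor> + 1"
    by linarith+
  then have "of_int \<lfloor>x / (2 * pi)\<rfloor> * (2 * pi) \<le> x" "x < (of_int \<lfloor>x / (2 * pi)\<rfloor> + 1) * (2 * pi)"
    using pos_le_divide_eq[OF p] pos_divide_less_eq[OF p] by blast+
  then show ?thesis unfolding nrm_def by (simp add: algebra_simps)
qed

lemma cis_nrm: "cis (nrm x) = cis x"
proof -
  have "cis (nrm x) = cis x * cis (- (2 * pi * of_int \<lfloor>x / (2 * pi)\<rfloor>))"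
    unfolding nrm_def by (simp add: cis_mult)
  also have "cis (- (2 * pi * of_int \<lfloor>x / (2 * pi)\<rfloor>)) = 1"
    by (simp add: cis.ctr complex_eq_iff)
  finally show ?thesis by simp
qed

definition alE :: "complex \<Rightarrow> real \<Rightarrow> real" where
  "alE y \<theta> = arcsin (Im (y * cis (- \<theta>)))"

lemma Im_bound:
  assumes "cmod y < 1" shows "\<bar>Im (y * cis (- \<theta>))\<bar> < 1"
proof -
  have "\<bar>Im (y * cis (- \<theta>))\<bar> \<le> cmod (y * cis (- \<theta>))" by (rule abs_Im_le_cmod)
  also have "\<dots> = cmod y" by (simp add: norm_mult)
  finally show ?thesis using assms by simp
qed

lemma alE_bounds:
  assumes "cmod y < 1" shows "- (pi/2) < alE y \<theta> \<and> alE y \<theta> < pi/2"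
  unfolding alE_def using Im_bound[OF assms, of \<theta>] by (intro arcsin_lt_bounded) auto

lemma sin_alE: assumes "cmod y < 1" shows "sin (alE y \<theta>) = Im (y * cis (- \<theta>))"
  unfolding alE_def using Im_bound[OF assms, of \<theta>] by (intro sin_arcsin) auto

lemma cos_alE: assumes "cmod y < 1" shows "cos (alE y \<theta>) = sqrt (1 - (Im (y * cis (- \<theta>)))^2)"
  unfolding alE_def using Im_bound[OF assms, of \<theta>] by (intro cos_arcsin) auto

lemma entryE_char:
  assumes y: "cmod y < 1"
  shows "entryE y \<theta> = (nrm (\<theta> - pi - alE y \<theta>), alE y \<theta>)"
  unfolding entryE_def
proof (rule the_equality)
  define \<alpha> where "\<alpha> = alE y \<theta>"
  define q where "q = y * cis (- \<theta>)"
  have yq: "y = q * cis \<theta>" by (simp add: q_def mult.assoc cis_mult)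
  have sa: "sin \<alpha> = Im q" unfolding \<alpha>_def q_def by (rule sin_alE[OF y])
  have ca: "cos \<alpha> = sqrt (1 - (Im q)^2)" unfolding \<alpha>_def q_def by (rule cos_alE[OF y])
  have qn: "(Re q)^2 + (Im q)^2 < 1"
  proof -
    have "cmod q = cmod y" by (simp add: q_def norm_mult)
    then have "cmod q ^ 2 < 1" using y by (simp add: abs_square_less_1)
    then show ?thesis by (simp add: cmod_power2)
  qed
  have "\<bar>Re q\<bar> \<le> sqrt (1 - (Im q)^2)"
    by (rule real_le_rsqrt) (use qn in simp)
  then have s0: "0 \<le> Re q + cos \<alpha>" using ca by linarith
  have cb: "cis (nrm (\<theta> - pi - \<alpha>)) = - cis \<theta> * cis (- \<alpha>)"
  proof -
    have "cis (\<theta> - pi - \<alpha>) = cis \<theta> * cis (- pi) * cis (- \<alpha>)"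
      by (simp only: cis_mult diff_conv_add_uminus)
    moreover have "cis (- pi) = -1" by (simp add: complex_eq_iff)
    ultimately show ?thesis unfolding cis_nrm by (simp only: mult_minus_right mult_1_right mult_minus_left)
  qed
  show "case (nrm (\<theta> - pi - alE y \<theta>), alE y \<theta>) of (\<beta>, \<alpha>) \<Rightarrow>
    \<beta> \<in> {0..<2 * pi} \<and> \<alpha> \<in> {- pi / 2<..<pi / 2} \<and> cis (\<beta> + pi + \<alpha>) = cis \<theta> \<and>
    (\<exists>s\<ge>0. y = cis \<beta> + complex_of_real s * cis \<theta>)"
    unfolding \<alpha>_def[symmetric]
  proof (simp only: prod.case, intro conjI)
    show "nrm (\<theta> - pi - \<alpha>) \<in> {0..<2 * pi}" by (rule nrm_range)
    show "\<alpha> \<in> {- pi / 2<..<pi / 2}" using alE_bounds[OF y, of \<theta>] by (simp add: \<alpha>_def)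
    show "cis (nrm (\<theta> - pi - \<alpha>) + pi + \<alpha>) = cis \<theta>"
    proof -
      have "cis (nrm (\<theta> - pi - \<alpha>) + pi + \<alpha>) = cis (nrm (\<theta> - pi - \<alpha>)) * cis (pi + \<alpha>)"
        by (simp add: cis_mult add.assoc)
      also have "\<dots> = cis (\<theta> - pi - \<alpha>) * cis (pi + \<alpha>)" by (simp only: cis_nrm)
      also have "\<dots> = cis \<theta>" by (simp add: cis_mult)
      finally show ?thesis .
    qed
    show "\<exists>s\<ge>0. y = cis (nrm (\<theta> - pi - \<alpha>)) + complex_of_real s * cis \<theta>"
    proof (intro exI conjI)
      show "0 \<le> Re q + cos \<alpha>" by (rule s0)
      show "y = cis (nrm (\<theta> - pi - \<alpha>)) + complex_of_real (Re q + cos \<alpha>) * cis \<theta>"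
      proof -
        have "q = of_real (Re q + cos \<alpha>) - cis (- \<alpha>)" using sa by (simp add: complex_eq_iff)
        then have "q * cis \<theta> = (of_real (Re q + cos \<alpha>) - cis (- \<alpha>)) * cis \<theta>" by simp
        then show ?thesis unfolding cb yq by (simp add: algebra_simps)
      qed
    qed
  qed
next
  fix p assume "case p of (\<beta>, \<alpha>) \<Rightarrow>
    \<beta> \<in> {0..<2 * pi} \<and> \<alpha> \<in> {- pi / 2<..<pi / 2} \<and> cis (\<beta> + pi + \<alpha>) = cis \<theta> \<and>
    (\<exists>s\<ge>0. y = cis \<beta> + complex_of_real s * cis \<theta>)"
  then obtain \<beta>' \<alpha>' s where p: "p = (\<beta>', \<alpha>')" and b: "\<beta>' \<in> {0..<2 * pi}"
    and a: "\<alpha>' \<in> {- pi / 2<..<pi / 2}" and c: "cis (\<beta>' + pi + \<alpha>') = cis \<theta>"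
    and ye: "y = cis \<beta>' + complex_of_real s * cis \<theta>"
    by (cases p) auto
  have cb: "cis \<beta>' = cis \<theta> * cis (- pi - \<alpha>')"
    unfolding c[symmetric] by (simp add: cis_mult)
  have "y * cis (- \<theta>) = cis (- pi - \<alpha>') + of_real s"
    unfolding ye cb by (simp add: algebra_simps cis_mult)
  then have "Im (y * cis (- \<theta>)) = sin \<alpha>'" by (simp add: sin_diff)
  then have aa: "alE y \<theta> = \<alpha>'" unfolding alE_def using a by (simp add: arcsin_sin)
  have "cis \<beta>' = cis (nrm (\<theta> - pi - \<alpha>'))"
    unfolding cb cis_nrm by (simp only: cis_mult diff_conv_add_uminus minus_diff_eq add.assoc)
  then have "\<beta>' = nrm (\<theta> - pi - \<alpha>')" using cis_inj b nrm_range by blast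
  then show "p = (nrm (\<theta> - pi - alE y \<theta>), alE y \<theta>)" using p aa by simp
qed

definition Th :: "real \<Rightarrow> real \<Rightarrow> real" where
  "Th k u = u + arctan (((k - 1) * sin u * cos u) / ((cos u)^2 + k * (sin u)^2))"

definition N2 :: "real \<Rightarrow> real \<Rightarrow> real" where
  "N2 k u = (cos u)^2 + k^2 * (sin u)^2"

lemma D_ge: fixes k u :: real shows "1 \<le> k \<Longrightarrow> 1 \<le> (cos u)^2 + k * (sin u)^2"
proof -
  assume k: "1 \<le> k"
  have "(cos u)^2 + k * (sin u)^2 = 1 + (k - 1) * (sin u)^2" using sin_cos_squared_add[of u]
    by (simp add: algebra_simps)
  then show ?thesis using k by simp
qed

lemma N2_ge: fixes k u :: real shows "1 \<le> k \<Longrightarrow> 1 \<le> N2 k u"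
proof -
  assume k: "1 \<le> k"
  have "N2 k u = 1 + (k^2 - 1) * (sin u)^2" using sin_cos_squared_add[of u] unfolding N2_def
    by (simp add: algebra_simps)
  moreover have "1 \<le> k^2" using k by (metis one_le_power)
  ultimately show ?thesis by simp
qed

lemma D_pos: fixes k u :: real shows "1 \<le> k \<Longrightarrow> 0 < (cos u)^2 + k * (sin u)^2"
  using D_ge[of k u] by linarith
lemma N2_pos: fixes k u :: real shows "1 \<le> k \<Longrightarrow> 0 < N2 k u"
  using N2_ge[of k u] by linarith

lemma DE_sq: "((cos u)^2 + k * (sin u)^2)^2 + ((k - 1) * sin u * cos u)^2 = N2 k u"
proof -
  have cs: "(cos u)^2 + (sin u)^2 = 1" using sin_cos_squared_add[of u] by simp
  show ?thesis unfolding N2_def using cs by algebra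
qed

lemma Th_cos_sin:
  assumes k: "1 \<le> k"
  shows "cos (Th k u) = cos u / sqrt (N2 k u)" "sin (Th k u) = k * sin u / sqrt (N2 k u)"
proof -
  define D where "D = (cos u)^2 + k * (sin u)^2"
  define E where "E = (k - 1) * sin u * cos u"
  have Dp: "0 < D" unfolding D_def by (rule D_pos[OF k])
  have NE: "D^2 + E^2 = N2 k u" unfolding D_def E_def by (rule DE_sq)
  have Np: "0 < N2 k u" by (rule N2_pos[OF k])
  have sq: "sqrt (1 + (E / D)^2) = sqrt (N2 k u) / D"
  proof -
    have "1 + (E / D)^2 = N2 k u / D^2" using Dp NE by (simp add: field_simps)
    then show ?thesis using Dp by (simp add: real_sqrt_divide)
  qed
  have ca: "cos (arctan (E / D)) = D / sqrt (N2 k u)"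
    unfolding cos_arctan sq using Dp by simp
  have sa: "sin (arctan (E / D)) = E / sqrt (N2 k u)"
    unfolding sin_arctan sq using Dp by simp
  have cs: "(cos u)^2 + (sin u)^2 = 1" using sin_cos_squared_add[of u] by simp
  have e1: "cos u * D - sin u * E = cos u" unfolding D_def E_def using cs by algebra
  have e2: "sin u * D + cos u * E = k * sin u" unfolding D_def E_def using cs by algebra
  have "cos (Th k u) = cos u * cos (arctan (E / D)) - sin u * sin (arctan (E / D))"
    unfolding Th_def D_def E_def by (simp add: cos_add)
  also have "\<dots> = (cos u * D - sin u * E) / sqrt (N2 k u)" unfolding ca sa by (simp add: algebra_simps diff_divide_distrib add_divide_distrib)
  finally show "cos (Th k u) = cos u / sqrt (N2 k u)" unfolding e1 .
  have "sin (Th k u) = sin u * cos (arctan (E / D)) + cos u * sin (arctan (E / D))"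
    unfolding Th_def D_def E_def by (simp add: sin_add)
  also have "\<dots> = (sin u * D + cos u * E) / sqrt (N2 k u)" unfolding ca sa by (simp add: algebra_simps diff_divide_distrib add_divide_distrib)
  finally show "sin (Th k u) = k * sin u / sqrt (N2 k u)" unfolding e2 .
qed

lemma Th_deriv:
  assumes k: "1 \<le> k"
  shows "(Th k has_real_derivative (k / N2 k u)) (at u)"
proof -
  define D where "D = (cos u)^2 + k * (sin u)^2"
  define E where "E = (k - 1) * sin u * cos u"
  have Dp: "0 < D" unfolding D_def by (rule D_pos[OF k])
  have NE: "D^2 + E^2 = N2 k u" unfolding D_def E_def by (rule DE_sq)
  have Np: "0 < N2 k u" by (rule N2_pos[OF k])
  have cs: "(cos u)^2 + (sin u)^2 = 1" using sin_cos_squared_add[of u] by simp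
  have key: "D^2 + E^2 + ((k - 1) * ((cos u)^2 - (sin u)^2)) * D - E * (2 * (k - 1) * sin u * cos u) = k"
    unfolding D_def E_def using cs by algebra
  have fin: "1 + inverse (1 + (E/D)^2) * (Y / (D * D)) = k / N2 k u"
    if Y: "Y = (k - 1) * ((cos u)^2 - (sin u)^2) * D - E * (2 * (k - 1) * sin u * cos u)" for Y
  proof -
    have i: "inverse (1 + (E/D)^2) = D^2 / N2 k u" using Dp NE by (simp add: field_simps)
    have "1 + inverse (1 + (E/D)^2) * (Y / (D * D)) = (N2 k u + Y) / N2 k u"
      unfolding i using Dp Np by (simp add: field_simps power2_eq_square)
    also have "N2 k u + Y = k" using key NE Y by simp
    finally show ?thesis .
  qed
  have "(Th k has_real_derivative k / N2 k u) (at u)"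
    unfolding Th_def
    apply (rule derivative_eq_intros refl)+
    apply (metis D_pos[OF k] less_irrefl)
    apply (rule refl)+
    apply (fold D_def E_def)
    apply (rule fin)
    apply (simp add: algebra_simps power2_eq_square)
    done
  moreover have "1 + ((((k - 1) * ((cos u)^2 - (sin u)^2)) * D - E * (2 * (k - 1) * sin u * cos u)) / D^2)
         / (1 + (E / D)^2) = k / N2 k u"
  proof -
    have "1 + (E / D)^2 = N2 k u / D^2" using Dp NE by (simp add: field_simps)
    then have "1 + ((((k - 1) * ((cos u)^2 - (sin u)^2)) * D - E * (2 * (k - 1) * sin u * cos u)) / D^2)
         / (1 + (E / D)^2) = (D^2 + E^2 + ((k - 1) * ((cos u)^2 - (sin u)^2)) * D - E * (2 * (k - 1) * sin u * cos u)) / N2 k u"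
      using Dp Np NE by (simp add: field_simps)
    then show ?thesis unfolding key .
  qed
  ultimately show ?thesis by simp
qed

lemma frac_eqI: "(b::complex) \<noteq> 0 \<Longrightarrow> d \<noteq> 0 \<Longrightarrow> a * d = c * b \<Longrightarrow> a / b = c / d"
  by (simp add: divide_simps)

lemma G5:
  fixes r C S :: real
  assumes r: "0 \<le> r" "r < 1" and cs: "C^2 + S^2 = 1"
  defines "m \<equiv> 1 - r^2" and "e \<equiv> 1 - r * C"
  shows "Mf (- 2 * r * S / m) ((r * C - r^2) / e) = Complex (r^2 - r * C) (r * S) / Complex (1 - r * C) (r * S)"
proof -
  have "\<bar>C\<bar> \<le> 1" proof - have "C^2 \<le> 1" using cs by (metis le_add_same_cancel1 zero_le_power2) then show ?thesis using abs_square_le_1 by blast qed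
  then have "r * C < 1" using r
    by (smt (verit, ccfv_SIG) abs_le_D1 mult_left_le mult_nonneg_nonneg)
  then have ep: "0 < e" unfolding e_def by simp
  have mp: "0 < m" unfolding m_def using r by (simp add: power_less_one_iff abs_square_less_1)
  have d1: "Complex (1 - r * C) (r * S) \<noteq> 0" using ep unfolding e_def by (simp add: complex_eq_iff)
  have d2: "Complex (-2) ((- 2 * r * S / m) * (1 + (r * C - r^2) / e)) \<noteq> 0" by (simp add: complex_eq_iff)
  have ee: "e = 1 - r * C" unfolding e_def ..
  have me: "m = 1 - r^2" unfolding m_def ..
  have "1 + (r * C - r^2) / e = (e + r * C - r^2) / e" using ep by (simp add: field_simps)
  also have "e + r * C - r^2 = m" by (simp add: ee me)
  finally have X: "(- 2 * r * S / m) * (1 + (r * C - r^2) / e) = - 2 * r * S / e"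
    using mp ep by simp
  have d2': "Complex (-2) (- 2 * r * S / e) \<noteq> 0" by (simp add: complex_eq_iff)
  show ?thesis unfolding Mf_Complex X
    apply (rule frac_eqI[OF d2' d1])
    using ep cs ee
    apply (simp add: complex_eq_iff field_simps)
    apply algebra
    done
qed

lemma G6:
  fixes r C S :: real
  assumes r: "0 \<le> r" "r < 1" and cs: "C^2 + S^2 = 1"
  defines "m \<equiv> 1 - r^2" and "e \<equiv> 1 - r * C"
  shows "Vf (- 2 * r * S / m) ((r * C - r^2) / e) = (of_real (- m / 2) * Complex (1 - r * C) (- r * S)) / Complex (1 - r * C) (r * S)"
proof -
  have "\<bar>C\<bar> \<le> 1" proof - have "C^2 \<le> 1" using cs by (metis le_add_same_cancel1 zero_le_power2) then show ?thesis using abs_square_le_1 by blast qed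
  then have "r * C < 1" using r
    by (smt (verit, ccfv_SIG) abs_le_D1 mult_left_le mult_nonneg_nonneg)
  then have ep: "0 < e" unfolding e_def by simp
  have mp: "0 < m" unfolding m_def using r by (simp add: power_less_one_iff abs_square_less_1)
  have d1: "Complex (1 - r * C) (r * S) \<noteq> 0" using ep unfolding e_def by (simp add: complex_eq_iff)
  have d2: "Complex (-2) ((- 2 * r * S / m) * (1 + (r * C - r^2) / e)) \<noteq> 0" by (simp add: complex_eq_iff)
  have ee: "e = 1 - r * C" unfolding e_def ..
  have me: "m = 1 - r^2" unfolding m_def ..
  have "1 + (r * C - r^2) / e = (e + r * C - r^2) / e" using ep by (simp add: field_simps)
  also have "e + r * C - r^2 = m" by (simp add: ee me)
  finally have X: "(- 2 * r * S / m) * (1 + (r * C - r^2) / e) = - 2 * r * S / e"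
    using mp ep by simp
  have "Complex (-2) (- 2 * r * S / e) \<noteq> 0" by (simp add: complex_eq_iff)
  then have d2': "(Complex (-2) (- 2 * r * S / e))^2 \<noteq> 0" by simp
  show ?thesis unfolding Vf_Complex X
    apply (rule frac_eqI[OF d2' d1])
    using ep cs ee me
    apply (simp add: complex_eq_iff field_simps power2_eq_square)
    apply algebra
    done
qed

lemma test1:
  fixes r C S :: real
  assumes cs: "C^2 + S^2 = 1"
  shows "Complex ((1 - r^2) * C) ((1 + r^2) * S) * Complex (1 - r^2) (2 * r * S) * Complex (1 - r * C) (- r * S)
     = of_real (((1 - r^2) * C)^2 + ((1 + r^2) * S)^2) * Complex (C - r) S"
  using cs by (simp add: complex_eq_iff) algebra+

lemma Complex_div_real: "Complex a b / complex_of_real c = Complex (a / c) (b / c)"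
  by (simp add: complex_eq_iff)

lemma div_cancel_mid: "(b::real) \<noteq> 0 \<Longrightarrow> (a / b) * (b / c) = a / c"
  by (cases "c = 0") (simp_all add: field_simps)

lemma G_alpha:
  fixes r \<psi> u :: real
  assumes r: "0 \<le> r" "r < 1"
  defines "k \<equiv> (1 + r^2) / (1 - r^2)" and "\<rho> \<equiv> 2 * r / (1 + r^2)"
  defines "y \<equiv> complex_of_real \<rho> * cis \<psi>" and "\<theta> \<equiv> \<psi> + Th k u"
  shows "cmod y < 1"
    and "sin (alE y \<theta>) = - \<rho> * k * sin u / sqrt (N2 k u)"
    and "cos (alE y \<theta>) = 1 / sqrt (N2 k u)"
    and "tan (alE y \<theta>) = - 2 * r * sin u / (1 - r^2)"
    and "cis (\<theta> - pi - alE y \<theta>) = cis \<psi> * (Complex (r - cos u) (- sin u) / Complex (1 - r * cos u) (- r * sin u))"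
proof -
  have mp: "0 < 1 - r^2" using r by (simp add: abs_square_less_1)
  have k1: "1 \<le> k" unfolding k_def using mp by (simp add: field_simps)
  have Np: "0 < N2 k u" by (rule N2_pos[OF k1])
  have rp: "0 \<le> \<rho>" "\<rho> < 1"
  proof -
    show "0 \<le> \<rho>" unfolding \<rho>_def using r by simp
    have "0 < (1 - r)^2" using r by simp
    then have "2 * r < 1 + r^2" by (simp add: power2_eq_square algebra_simps)
    then show "\<rho> < 1" unfolding \<rho>_def by (simp add: field_simps add_pos_nonneg)
  qed
  show y: "cmod y < 1" unfolding y_def using rp by (simp add: norm_mult)
  have Im: "Im (y * cis (- \<theta>)) = - \<rho> * k * sin u / sqrt (N2 k u)"
  proof -
    have "y * cis (- \<theta>) = of_real \<rho> * cis (- Th k u)"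
      unfolding y_def \<theta>_def by (simp add: mult.assoc cis_mult)
    then show ?thesis using Th_cos_sin(2)[OF k1, of u] by simp
  qed
  show sa: "sin (alE y \<theta>) = - \<rho> * k * sin u / sqrt (N2 k u)"
    using sin_alE[OF y, of \<theta>] Im by simp
  have rk: "\<rho> * k = 2 * r / (1 - r^2)" unfolding \<rho>_def k_def
    by (rule div_cancel_mid) (smt (verit) zero_le_power2)
  have key: "N2 k u - (\<rho> * k * sin u)^2 = 1"
  proof -
    have "k^2 - (\<rho> * k)^2 = ((1 + r^2)^2 - (2 * r)^2) / (1 - r^2)^2"
      unfolding rk unfolding k_def by (simp add: power_divide diff_divide_distrib)
    also have "(1 + r^2)^2 - (2 * r)^2 = (1 - r^2)^2" by (simp add: power2_eq_square algebra_simps)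
    finally have kp: "k^2 - (\<rho> * k)^2 = 1" using mp by simp
    have "N2 k u - (\<rho> * k * sin u)^2 = (cos u)^2 + (k^2 - (\<rho> * k)^2) * (sin u)^2"
      unfolding N2_def by (simp add: power_mult_distrib algebra_simps)
    then show ?thesis unfolding kp using sin_cos_squared_add[of u] by simp
  qed
  show ca: "cos (alE y \<theta>) = 1 / sqrt (N2 k u)"
  proof -
    have "1 - (Im (y * cis (- \<theta>)))^2 = 1 / N2 k u"
      unfolding Im using Np key by (simp add: field_simps power2_eq_square)
    then show ?thesis using cos_alE[OF y, of \<theta>] by (simp add: real_sqrt_divide)
  qed
  show "tan (alE y \<theta>) = - 2 * r * sin u / (1 - r^2)"
  proof -
    have "tan (alE y \<theta>) = - \<rho> * k * sin u" unfolding tan_def sa ca using Np by simp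
    then show ?thesis using rk by simp
  qed
  show "cis (\<theta> - pi - alE y \<theta>) = cis \<psi> * (Complex (r - cos u) (- sin u) / Complex (1 - r * cos u) (- r * sin u))"
  proof -
    define sN where "sN = sqrt (N2 k u)"
    define P where "P = \<rho> * k"
    have sNp: "0 < sN" unfolding sN_def using Np by simp
    have sN2: "sN * sN = (cos u)^2 + k^2 * (sin u)^2" unfolding sN_def using Np by (simp add: N2_def)
    have e1: "cis (\<theta> - pi - alE y \<theta>) = cis \<psi> * cis (Th k u) * cis (- pi) * cis (- alE y \<theta>)"
      unfolding \<theta>_def by (simp only: cis_mult diff_conv_add_uminus add.assoc)
    have cT: "cis (Th k u) = Complex (cos u / sN) (k * sin u / sN)"
      unfolding cis.ctr Th_cos_sin[OF k1] sN_def ..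
    have cA: "cis (- alE y \<theta>) = Complex (1 / sN) (P * sin u / sN)"
      unfolding cis.ctr cos_minus sin_minus sa ca sN_def P_def by simp
    have cP: "cis (- pi) = -1" by (simp add: complex_eq_iff)
    have dn: "Complex (1 - r * cos u) (- r * sin u) \<noteq> 0"
    proof -
      have "\<bar>cos u\<bar> \<le> 1" by simp
      then have "r * cos u < 1" using r
        by (smt (verit, ccfv_SIG) abs_le_D1 mult_left_le mult_nonneg_nonneg)
      then show ?thesis by (simp add: complex_eq_iff)
    qed
    have Pk: "P = 2 * r / (1 - r^2)" "k = (1 + r^2) / (1 - r^2)" using rk by (simp_all add: P_def k_def)
    have cs: "(cos u)^2 + (sin u)^2 = 1" using sin_cos_squared_add[of u] by simp
    define m where "m = 1 - r^2"
    have m0: "m \<noteq> 0" using mp by (simp add: m_def)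
    have kK: "k = (1 + r^2) / m" unfolding k_def m_def ..
    have PR: "P = 2 * r / m" using Pk(1) by (simp add: m_def)
    have t1: "Complex (m * cos u) ((1 + r^2) * sin u) * Complex m (2 * r * sin u) * Complex (1 - r * cos u) (- r * sin u)
     = of_real ((m * cos u)^2 + ((1 + r^2) * sin u)^2) * Complex (cos u - r) (sin u)"
      unfolding m_def by (rule test1[OF cs])
    have Q: "(m * sN)^2 = (m * cos u)^2 + ((1 + r^2) * sin u)^2"
      using sN2 m0 unfolding kK by (simp add: power_mult_distrib field_simps power2_eq_square)
    have Qp: "(m * sN)^2 \<noteq> 0" using m0 sNp by simp
    have cT': "Complex (cos u / sN) (k * sin u / sN) = Complex (m * cos u) ((1 + r^2) * sin u) / of_real (m * sN)"
      using m0 sNp unfolding kK Complex_div_real by simp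
    have cA': "Complex (1 / sN) (P * sin u / sN) = Complex m (2 * r * sin u) / of_real (m * sN)"
      using m0 sNp unfolding PR Complex_div_real by simp
    have main: "Complex (cos u / sN) (k * sin u / sN) * (-1) * Complex (1 / sN) (P * sin u / sN)
        = Complex (r - cos u) (- sin u) / Complex (1 - r * cos u) (- r * sin u)"
    proof -
      have "Complex (cos u / sN) (k * sin u / sN) * (-1) * Complex (1 / sN) (P * sin u / sN)
         = - (Complex (m * cos u) ((1 + r^2) * sin u) * Complex m (2 * r * sin u)) / of_real ((m * sN)^2)"
        unfolding cT' cA' by (simp add: power2_eq_square)
      also have "\<dots> = Complex (r - cos u) (- sin u) / Complex (1 - r * cos u) (- r * sin u)"
      proof (rule frac_eqI)
        show "complex_of_real ((m * sN)\<^sup>2) \<noteq> 0" using Qp by simp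
        show "Complex (1 - r * cos u) (- r * sin u) \<noteq> 0" by (rule dn)
        have "- (Complex (m * cos u) ((1 + r^2) * sin u) * Complex m (2 * r * sin u)) * Complex (1 - r * cos u) (- r * sin u)
          = - (of_real ((m * cos u)^2 + ((1 + r^2) * sin u)^2) * Complex (cos u - r) (sin u))"
          using t1 by (simp add: mult.assoc)
        also have "\<dots> = Complex (r - cos u) (- sin u) * complex_of_real ((m * sN)\<^sup>2)"
          unfolding Q by (simp add: complex_eq_iff algebra_simps)
        finally show "- (Complex (m * cos u) ((1 + r^2) * sin u) * Complex m (2 * r * sin u)) * Complex (1 - r * cos u) (- r * sin u)
          = Complex (r - cos u) (- sin u) * complex_of_real ((m * sN)\<^sup>2)" .
      qed
      finally show ?thesis .
    qed
    have "cis \<psi> * cis (Th k u) * cis (- pi) * cis (- alE y \<theta>) = cis \<psi> * (cis (Th k u) * cis (- pi) * cis (- alE y \<theta>))"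
      by (simp only: mult.assoc)
    then show ?thesis by (simp only: e1 cT cA cP main)
  qed
qed

lemma pointwise:
  fixes r \<psi> u :: real
  assumes r: "0 \<le> r" "r < 1"
  defines "k \<equiv> (1 + r^2) / (1 - r^2)" and "\<rho> \<equiv> 2 * r / (1 + r^2)"
  defines "y \<equiv> complex_of_real \<rho> * cis \<psi>" and "\<theta> \<equiv> \<psi> + Th k u"
  shows "piH (complex_of_real r * cis \<psi>) (complex_of_real ((1 - r^2) / 2) * cis (\<psi> + u))
     = (nrm (\<theta> - pi - alE y \<theta>), tan (alE y \<theta>))"
proof -
  define C where "C = cos u"
  define S where "S = sin u"
  have cs: "C^2 + S^2 = 1" unfolding C_def S_def using sin_cos_squared_add[of u] by simp
  have mp: "0 < 1 - r^2" using r by (simp add: abs_square_less_1)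
  have C1: "\<bar>C\<bar> \<le> 1" unfolding C_def by simp
  then have rC: "r * C < 1" using r
    by (smt (verit, ccfv_SIG) abs_le_D1 mult_left_le mult_nonneg_nonneg)
  have ep: "0 < 1 - r * C" using rC by simp
  have GA4: "tan (alE y \<theta>) = - 2 * r * sin u / (1 - r^2)"
    unfolding y_def \<theta>_def k_def \<rho>_def by (rule G_alpha(4)[OF r])
  have GA5: "cis (\<theta> - pi - alE y \<theta>) = cis \<psi> * (Complex (r - cos u) (- sin u) / Complex (1 - r * cos u) (- r * sin u))"
    unfolding y_def \<theta>_def k_def \<rho>_def by (rule G_alpha(5)[OF r])
  define s0 where "s0 = (r * C - r^2) / (1 - r * C)"
  have tA: "tan (alE y \<theta>) = - 2 * r * S / (1 - r^2)" using GA4 by (simp add: S_def)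
  have s0b: "\<bar>s0\<bar> < 1"
  proof -
    have "r^2 < 1" using mp by simp
    then have l: "-1 < s0" unfolding s0_def using ep by (simp add: field_simps)
    have "0 < 1 - 2 * r * C + r^2"
    proof (rule ccontr)
      assume "\<not> 0 < 1 - 2 * r * C + r^2"
      moreover have "1 - 2 * r * C + r^2 = (r - C)^2 + S^2" using cs by (simp add: power2_eq_square algebra_simps)
      ultimately have "(r - C)^2 + S^2 = 0" by (smt (verit) zero_le_power2)
      then have "r = C" "S = 0" by (simp_all add: sum_power2_eq_zero_iff)
      then have "C^2 = 1" using cs by simp
      then have "\<bar>C\<bar> = 1" by (auto simp: power2_eq_1_iff)
      then show False using \<open>r = C\<close> r by simp
    qed
    then have u: "s0 < 1" unfolding s0_def using ep by (simp add: field_simps)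
    show ?thesis using l u by simp
  qed
  have cb: "cis (nrm (\<theta> - pi - alE y \<theta>)) = cis \<psi> * (Complex (r - C) (- S) / Complex (1 - r * C) (- r * S))"
    unfolding cis_nrm GA5 C_def S_def ..
  have M: "Mf (tan (alE y \<theta>)) s0 = Complex (r^2 - r * C) (r * S) / Complex (1 - r * C) (r * S)"
    unfolding tA s0_def by (rule G5[OF r cs])
  have V: "Vf (tan (alE y \<theta>)) s0 = (of_real (- (1 - r^2) / 2) * Complex (1 - r * C) (- r * S)) / Complex (1 - r * C) (r * S)"
    unfolding tA s0_def by (rule G6[OF r cs])
  have d1: "Complex (1 - r * C) (r * S) \<noteq> 0" "Complex (1 - r * C) (- r * S) \<noteq> 0"
    using ep by (simp_all add: complex_eq_iff)
  show ?thesis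
  proof (rule piH_char[OF nrm_range s0b])
    show "cis (nrm (\<theta> - pi - alE y \<theta>)) * Mf (tan (alE y \<theta>)) s0 = complex_of_real r * cis \<psi>"
    proof -
      have id: "Complex (r - C) (- S) * Complex (r^2 - r * C) (r * S) = of_real r * (Complex (1 - r * C) (- r * S) * Complex (1 - r * C) (r * S))"
        using cs by (simp add: complex_eq_iff) algebra+
      show ?thesis unfolding cb M using d1 id
        by (simp add: field_simps)
    qed
    show "cis (nrm (\<theta> - pi - alE y \<theta>)) * Vf (tan (alE y \<theta>)) s0 = complex_of_real ((1 - r^2) / 2) * cis (\<psi> + u)"
    proof -
      have cu: "cis u = Complex C S" by (simp add: C_def S_def cis.ctr)
      have id: "- Complex (r - C) (- S) = cis u * Complex (1 - r * C) (r * S)"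
        unfolding cu using cs by (simp add: complex_eq_iff) algebra+
      define A where "A = Complex (r - C) (- S)"
      define B where "B = Complex (1 - r * C) (r * S)"
      define B' where "B' = Complex (1 - r * C) (- r * S)"
      have dB: "B \<noteq> 0" "B' \<noteq> 0" using d1 by (simp_all add: B_def B'_def)
      have "cis \<psi> * (A / B') * ((of_real (- (1 - r^2) / 2) * B') / B)
          = cis \<psi> * of_real ((1 - r^2) / 2) * ((- A) / B)" using dB by (simp add: field_simps)
      also have "(- A) / B = cis u" using id dB by (simp add: A_def B_def divide_eq_eq)
      also have "cis \<psi> * of_real ((1 - r^2) / 2) * cis u = complex_of_real ((1 - r^2) / 2) * cis (\<psi> + u)"
        by (simp add: cis_mult[symmetric])
      finally show ?thesis unfolding cb V A_def B_def B'_def .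
    qed
  qed
qed

lemma periodic_int:
  fixes f :: "real \<Rightarrow> 'a"
  assumes per: "\<And>x. f (x + T) = f x"
  shows "f (x + of_int n * T) = f x"
proof -
  have nat: "f (x + of_nat m * T) = f x" for x m
  proof (induction m)
    case 0 then show ?case by simp
  next
    case (Suc m)
    have "x + of_nat (Suc m) * T = (x + of_nat m * T) + T" by (simp add: algebra_simps)
    then have "f (x + of_nat (Suc m) * T) = f ((x + of_nat m * T) + T)" by (rule arg_cong)
    also have "\<dots> = f (x + of_nat m * T)" by (rule per)
    finally show ?case using Suc by simp
  qed
  show ?thesis
  proof (cases "n \<ge> 0")
    case True
    then have "n = int (nat n)" by simp
    then have eq: "x + of_int n * T = x + of_nat (nat n) * T" by (metis of_int_of_nat_eq)
    show ?thesis unfolding eq by (rule nat)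
  next
    case False
    define m where "m = nat (- n)"
    have m: "of_int n = - (of_nat m :: real)" using False by (simp add: m_def)
    have "f (x + of_int n * T) = f (x + of_int n * T + of_nat m * T)" by (rule nat[symmetric])
    also have "x + of_int n * T + of_nat m * T = x" unfolding m by (simp add: algebra_simps)
    finally show ?thesis .
  qed
qed

lemma periodic_integral:
  fixes f :: "real \<Rightarrow> real"
  assumes cont: "continuous_on UNIV f" and per: "\<And>x. f (x + T) = f x" and T: "0 < T"
  shows "integral {a..a+T} f = integral {0..T} f"
proof -
  define n where "n = \<lfloor>a / T\<rfloor>"
  define b where "b = a - of_int n * T"
  have "of_int n \<le> a / T" "a / T < of_int n + 1" unfolding n_def by linarith+
  then have nb: "of_int n * T \<le> a" "a < (of_int n + 1) * T"
    using pos_le_divide_eq[OF T] pos_divide_less_eq[OF T] by blast+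
  then have b: "0 \<le> b" "b < T" unfolding b_def by (simp_all add: algebra_simps)
  have int: "\<And>c d. f integrable_on {c..d}"
    by (rule integrable_continuous_interval) (use cont continuous_on_subset in blast)
  have pn: "\<And>x. f (x + of_int n * T) = f x" "\<And>x. f (x + - T) = f x"
    using periodic_int[of f T, OF per, of _ n] periodic_int[of f T, OF per, of _ "-1"] by simp_all
  have e1: "(\<lambda>x. f (x + of_int n * T)) = f" using pn(1) by (rule ext)
  have e2: "(\<lambda>x. f (x + - T)) = f" using pn(2) by (rule ext)
  have "integral {a..a+T} f = integral {a - of_int n * T .. a + T - of_int n * T} (\<lambda>x. f (x + of_int n * T))"
    by (rule integral_shift_real_ivl[symmetric])
  also have "\<dots> = integral {b..b+T} f"
    unfolding e1 b_def by (simp only: diff_add_eq add_diff_eq[symmetric] add.commute)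
  also have "\<dots> = integral {b..T} f + integral {T..b+T} f"
    by (rule sym, rule Henstock_Kurzweil_Integration.integral_combine) (use b int in auto)
  also have "integral {T..b+T} f = integral {0 - (-T)..b - (-T)} (\<lambda>x. f (x + -T))"
    unfolding e2 by (simp only: diff_minus_eq_add add_0_left add.commute)
  also have "\<dots> = integral {0..b} f" by (rule integral_shift_real_ivl)
  finally have "integral {a..a+T} f = integral {b..T} f + integral {0..b} f" .
  also have "\<dots> = integral {0..T} f"
    by (subst add.commute, rule Henstock_Kurzweil_Integration.integral_combine) (use b int in auto)
  finally show ?thesis .
qed

lemma g_cont: assumes "smooth_on_GH g" shows "isCont g p"
proof -
  have "smooth2 g" using assms by (simp add: smooth_on_GH_def)
  then obtain g' where "\<forall>x. (g has_derivative g' x) (at x)" by (cases rule: smooth2.cases) auto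
  then show ?thesis using has_derivative_continuous by blast
qed

lemma g_per: assumes "smooth_on_GH g" and "cis a = cis b" shows "g (a, x) = g (b, x)"
proof -
  have per: "\<And>\<beta>. (\<lambda>\<beta>. g (\<beta>, x)) (\<beta> + 2 * pi) = (\<lambda>\<beta>. g (\<beta>, x)) \<beta>"
    using assms(1) by (simp add: smooth_on_GH_def)
  have "sin a = sin b \<and> cos a = cos b" using assms(2) by (metis cis.sel(1) cis.sel(2))
  then obtain j :: int where j: "a = b + 2 * pi * j" using sin_cos_eq_iff by blast
  have "(\<lambda>\<beta>. g (\<beta>, x)) (b + of_int j * (2 * pi)) = (\<lambda>\<beta>. g (\<beta>, x)) b"
    by (rule periodic_int[of "\<lambda>\<beta>. g (\<beta>, x)", OF per])
  then show ?thesis using j by (simp add: algebra_simps)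
qed

lemma alE_cont: assumes y: "cmod y < 1" shows "isCont (alE y) \<theta>"
proof -
  have eq: "(\<lambda>\<theta>. Im (y * cis (- \<theta>))) = (\<lambda>\<theta>. Im y * cos \<theta> - Re y * sin \<theta>)"
    by (simp add: fun_eq_iff)
  have i: "isCont (\<lambda>\<theta>. Im (y * cis (- \<theta>))) \<theta>" unfolding eq by (intro continuous_intros)
  have "isCont arcsin (Im (y * cis (- \<theta>)))"
    using Im_bound[OF y, of \<theta>] by (intro isCont_arcsin) auto
  then show ?thesis unfolding alE_def[abs_def] by (rule isCont_o2[OF i])
qed

lemma cos_alE_pos: assumes y: "cmod y < 1" shows "0 < cos (alE y \<theta>)"
  using alE_bounds[OF y, of \<theta>] by (intro cos_gt_zero_pi) auto

lemma K_cont: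
  assumes g: "smooth_on_GH g" and y: "cmod y < 1"
  shows "isCont (\<lambda>\<theta>. g (\<theta> - pi - alE y \<theta>, tan (alE y \<theta>))) \<theta>"
proof -
  have a: "isCont (alE y) \<theta>" by (rule alE_cont[OF y])
  have t: "isCont (\<lambda>\<theta>. tan (alE y \<theta>)) \<theta>"
    using cos_alE_pos[OF y, of \<theta>] by (intro isCont_o2[OF a] isCont_tan) simp
  have p: "isCont (\<lambda>\<theta>. (\<theta> - pi - alE y \<theta>, tan (alE y \<theta>))) \<theta>"
    using a t cos_alE_pos[OF y, of \<theta>] by (intro continuous_intros) auto
  show ?thesis by (rule isCont_o2[OF p g_cont[OF g]])
qed

lemma Th_periodic: "Th k (u + 2 * pi) = Th k u + 2 * pi"
  unfolding Th_def by simp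

lemma Th_bound: "u - pi / 2 \<le> Th k u \<and> Th k u \<le> u + pi / 2"
  unfolding Th_def using arctan_bounded[of "(k - 1) * sin u * cos u / ((cos u)\<^sup>2 + k * (sin u)\<^sup>2)"]
  by auto

lemma entryE_per: "entryE y (\<theta> + 2 * pi) = entryE y \<theta>"
proof -
  have "cis (\<theta> + 2 * pi) = cis \<theta>" by (simp add: complex_eq_iff)
  then show ?thesis unfolding entryE_def by simp
qed

theorem theorem3p14:
  fixes g :: "real \<times> real \<Rightarrow> real" and z :: complex
  assumes "smooth_on_GH g" and "cmod z < 1"
  shows "backprojH g z =
    sqrt (dfun (PhiM z)) * backprojE (\<lambda>p. (muE p) powi (-2) * gtilde g p) (PhiM z)"
proof -
  note gs = assms(1)
  define r where "r = cmod z"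
  define \<psi> where "\<psi> = Arg z"
  have r: "0 \<le> r" "r < 1" using assms(2) by (simp_all add: r_def)
  have zeq: "z = complex_of_real r * cis \<psi>"
    using rcis_cmod_Arg[of z] by (simp add: rcis_def r_def \<psi>_def)
  define k where "k = (1 + r^2) / (1 - r^2)"
  define \<rho> where "\<rho> = 2 * r / (1 + r^2)"
  define y where "y = complex_of_real \<rho> * cis \<psi>"
  have mp: "0 < 1 - r^2" using r by (simp add: abs_square_less_1)
  have p1: "0 < 1 + r^2" by (simp add: add_pos_nonneg)
  have k1: "1 \<le> k" unfolding k_def using mp by (simp add: field_simps)
  have k0: "k \<noteq> 0" using k1 by simp
  have yn: "cmod y < 1" unfolding y_def \<rho>_def by (rule G_alpha(1)[OF r])
  have cHz: "cH z = (1 - r^2) / 2" by (simp add: cH_def r_def)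
  have Phi: "PhiM z = y"
    unfolding PhiM_def y_def \<rho>_def zeq using p1 by (simp add: norm_mult r field_simps)
  have rho0: "0 \<le> \<rho>" unfolding \<rho>_def using r p1 by simp
  have sq: "sqrt (dfun (PhiM z)) = 1 / k"
  proof -
    have "dfun (PhiM z) = 1 - \<rho>^2" unfolding Phi dfun_def y_def using rho0 by (simp add: norm_mult)
    also have "\<dots> = ((1 - r^2) / (1 + r^2))^2"
    proof -
      have e: "(1 - r^2)^2 + (2 * r)^2 = (1 + r^2)^2" by (simp add: power2_eq_square algebra_simps)
      have "((1 - r^2) / (1 + r^2))^2 + \<rho>^2 = ((1 - r^2)^2 + (2 * r)^2) / (1 + r^2)^2"
        unfolding \<rho>_def by (simp add: power_divide add_divide_distrib)
      also have "\<dots> = 1" unfolding e using p1 by simp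
      finally show ?thesis by simp
    qed
    finally show ?thesis using mp p1 unfolding k_def by simp
  qed
  define K where "K = (\<lambda>\<theta>. g (\<theta> - pi - alE y \<theta>, tan (alE y \<theta>)))"
  define Hf where "Hf = (\<lambda>\<theta>. (\<lambda>p. (muE p) powi (-2) * gtilde g p) (entryE y \<theta>))"
  have Hf_eq: "Hf \<theta> = K \<theta> / (cos (alE y \<theta>))^2" for \<theta>
  proof -
    have "g (nrm (\<theta> - pi - alE y \<theta>), tan (alE y \<theta>)) = K \<theta>"
      unfolding K_def by (rule g_per[OF gs cis_nrm])
    then show ?thesis unfolding Hf_def entryE_char[OF yn] muE_def gtilde_def
      by (simp add: power_int_def divide_inverse mult.commute power_inverse)
  qed
  have Hcont: "continuous_on UNIV Hf"
  proof (rule continuous_at_imp_continuous_on, rule ballI)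
    fix \<theta> :: real
    have "isCont (\<lambda>\<theta>. K \<theta> / (cos (alE y \<theta>))^2) \<theta>"
      using K_cont[OF gs yn, of \<theta>] alE_cont[OF yn, of \<theta>] cos_alE_pos[OF yn, of \<theta>]
      unfolding K_def by (intro continuous_intros isCont_o2[OF alE_cont[OF yn]]) auto
    then show "isCont Hf \<theta>" using Hf_eq by (simp add: fun_eq_iff[symmetric] Hf_eq[abs_def])
  qed
  have Hper: "Hf (\<theta> + 2 * pi) = Hf \<theta>" for \<theta> unfolding Hf_def entryE_per ..
  define F where "F = (\<lambda>\<phi>. g (piH z (complex_of_real (cH z) * cis \<phi>)))"
  have Fpt: "F (u + \<psi>) = K (\<psi> + Th k u)" for u
  proof -
    have "piH z (complex_of_real (cH z) * cis (u + \<psi>)) = 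
       (nrm ((\<psi> + Th k u) - pi - alE y (\<psi> + Th k u)), tan (alE y (\<psi> + Th k u)))"
    proof -
      have P: "piH z (complex_of_real ((1 - r^2) / 2) * cis (\<psi> + u)) = 
       (nrm ((\<psi> + Th k u) - pi - alE y (\<psi> + Th k u)), tan (alE y (\<psi> + Th k u)))"
        unfolding zeq k_def y_def \<rho>_def by (rule pointwise[OF r])
      show ?thesis unfolding cHz add.commute[of u \<psi>] P ..
    qed
    then show ?thesis unfolding F_def K_def by (simp add: g_per[OF gs cis_nrm])
  qed
  define a0 where "a0 = - \<psi>"
  define b0 where "b0 = 2 * pi - \<psi>"
  have ab: "a0 \<le> b0" unfolding a0_def b0_def by simp
  have Thp: "\<psi> + Th k b0 = (\<psi> + Th k a0) + 2 * pi"
    using Th_periodic[of k a0] unfolding a0_def b0_def by (simp add: algebra_simps)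
  have le: "\<psi> + Th k a0 \<le> \<psi> + Th k b0" unfolding Thp by simp
  have img: "(\<lambda>u. \<psi> + Th k u) ` {a0..b0} \<subseteq> {-pi..3*pi}"
  proof
    fix x assume "x \<in> (\<lambda>u. \<psi> + Th k u) ` {a0..b0}"
    then obtain u where u: "u \<in> {a0..b0}" "x = \<psi> + Th k u" by auto
    show "x \<in> {-pi..3*pi}" using Th_bound[of u k] u pi_gt_zero unfolding a0_def b0_def by auto
  qed
  have Hc: "continuous_on {-pi..3*pi} Hf" using Hcont continuous_on_subset by blast
  have der: "((\<lambda>u. \<psi> + Th k u) has_real_derivative (k / N2 k u)) (at u within {a0..b0})" for u
  proof -
    have "((\<lambda>u. \<psi> + Th k u) has_real_derivative 0 + k / N2 k u) (at u)"
      by (intro derivative_intros Th_deriv[OF k1])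
    then show ?thesis by (simp add: has_field_derivative_at_within)
  qed
  have sub: "((\<lambda>u. (k / N2 k u) *\<^sub>R Hf (\<psi> + Th k u)) has_integral
      integral {\<psi> + Th k a0 .. \<psi> + Th k b0} Hf) {a0..b0}"
    by (rule has_integral_substitution[where c="-pi" and d="3*pi", OF ab le img Hc der])
  have IH: "integral {\<psi> + Th k a0 .. \<psi> + Th k b0} Hf = integral {0..2*pi} Hf"
    unfolding Thp by (rule periodic_integral[OF Hcont Hper]) simp
  have w: "(k / N2 k u) *\<^sub>R Hf (\<psi> + Th k u) = k * K (\<psi> + Th k u)" for u
  proof -
    have c: "cos (alE y (\<psi> + Th k u)) = 1 / sqrt (N2 k u)"
      unfolding y_def \<rho>_def k_def by (rule G_alpha(3)[OF r])
    have Np: "0 < N2 k u" by (rule N2_pos[OF k1])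
    have "(cos (alE y (\<psi> + Th k u)))^2 = 1 / N2 k u" unfolding c using Np
      by (simp add: power_divide)
    then show ?thesis unfolding Hf_eq using Np by simp
  qed
  have "((\<lambda>u. k * K (\<psi> + Th k u)) has_integral integral {0..2*pi} Hf) {a0..b0}"
    using sub unfolding w IH .
  then have KI: "((\<lambda>u. K (\<psi> + Th k u)) has_integral integral {0..2*pi} Hf / k) {a0..b0}"
    using has_integral_mult_right_iff[OF k0] by blast
  have "backprojH g z = integral {0..2*pi} F" unfolding backprojH_def F_def ..
  also have "\<dots> = integral {0 - \<psi>..2*pi - \<psi>} (\<lambda>x. F (x + \<psi>))"
    by (rule integral_shift_real_ivl[symmetric])
  also have "\<dots> = integral {a0..b0} (\<lambda>u. K (\<psi> + Th k u))"
    unfolding Fpt a0_def b0_def by simp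
  also have "\<dots> = integral {0..2*pi} Hf / k" using KI by (rule integral_unique)
  also have "\<dots> = sqrt (dfun (PhiM z)) * backprojE (\<lambda>p. (muE p) powi (-2) * gtilde g p) (PhiM z)"
    unfolding sq unfolding Phi backprojE_def Hf_def by simp
  finally show ?thesis .
qed

end
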